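(* Let $\beta>0$, $F>0$, and $(f_{0,k})_{k\ge1}$ with $\sum_k k^{2\beta}f_{0,k}^2\le F^2$. For $n\ge1$ let $X_k=f_{0,k}+n^{-1/2}\xi_k$, $k\ge1$, with $\xi_k$ i.i.d. $\mathcal N(0,1)$. Let $K_n=n^{1/(2\beta+1)}$, $N:=\{k:|f_{0,k}|\le1/\sqrt n\}$, and for $k\ge1,\ell\ge0$, $$A_{k,\ell}:=\Big\{|X_k|\le\sqrt{\tfrac{4\log(n(\ell+1)^2)}{n}}\Big\},\qquad A_n:=\bigcap_{K_n<k\le n,\,k\in N}A_{k,0}\ \cap\ \bigcap_{\ell\ge1}\ \bigcap_{\ell n<k\le(\ell+1)n,\,k\in N}A_{k,\ell}.$$ Then $P_{f_0}(A_n^c)\to0$ as $n\to\infty$.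
   Context: $P_{f_0}$ is the law of $(X_k)_{k\ge1}$ in the stated sequence model. *)

theory Defs
  imports "HOL-Probability.Probability"
begin

definition obsX :: "(nat \<Rightarrow> real) \<Rightarrow> nat \<Rightarrow> (nat \<Rightarrow> 'a \<Rightarrow> real) \<Rightarrow> nat \<Rightarrow> 'a \<Rightarrow> real" where
  "obsX f0 n \<xi> k \<omega> = f0 k + \<xi> k \<omega> / sqrt (real n)"

definition smallSet :: "(nat \<Rightarrow> real) \<Rightarrow> nat \<Rightarrow> nat set" where
  "smallSet f0 n = {k. 1 \<le> k \<and> \<bar>f0 k\<bar> \<le> 1 / sqrt (real n)}"

definition eventA :: "(nat \<Rightarrow> real) \<Rightarrow> nat \<Rightarrow> (nat \<Rightarrow> 'a \<Rightarrow> real) \<Rightarrow> nat \<Rightarrow> nat \<Rightarrow> 'a set" where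
  "eventA f0 n \<xi> k l = {\<omega>. \<bar>obsX f0 n \<xi> k \<omega>\<bar> \<le> sqrt (4 * ln (real n * (real l + 1)^2) / real n)}"

definition eventAn :: "'a measure \<Rightarrow> real \<Rightarrow> (nat \<Rightarrow> real) \<Rightarrow> nat \<Rightarrow> (nat \<Rightarrow> 'a \<Rightarrow> real) \<Rightarrow> 'a set" where
  "eventAn M \<beta> f0 n \<xi> = space M
     \<inter> (\<Inter>k\<in>{k. real n powr (1 / (2 * \<beta> + 1)) < real k \<and> k \<le> n \<and> k \<in> smallSet f0 n}. eventA f0 n \<xi> k 0)
     \<inter> (\<Inter>l\<in>{l. 1 \<le> l}. \<Inter>k\<in>{k. l * n < k \<and> k \<le> (l + 1) * n \<and> k \<in> smallSet f0 n}. eventA f0 n \<xi> k l)"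

end

theory Submission
  imports Defs "HOL-Real_Asymp.Real_Asymp"
begin


lemma nd_id: "std_normal_density t * exp (3 * t^2 / 8) = 2 * normal_density 0 2 t"
proof -
  have s: "sqrt (2 * pi * 2^2) = 2 * sqrt (2*pi)"
    by (metis mult.commute real_sqrt_mult real_sqrt_abs abs_numeral power2_eq_square real_sqrt_mult_self)
  have "exp (- t\<^sup>2 / 2) * exp (3 * t^2 / 8) = exp (-(t - 0)\<^sup>2 / (2 * 2\<^sup>2))"
    by (simp add: exp_add[symmetric])
  then show ?thesis unfolding std_normal_density_def normal_density_def s
    by (simp add: field_simps)
qed

lemma gauss_tail:
  assumes "distributed M lborel X std_normal_density" and "prob_space M" and "y \<ge> 0"
  shows "measure M {\<omega>\<in>space M. y < \<bar>X \<omega>\<bar>} \<le> 2 * exp (- 3 * y^2 / 8)"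
proof -
  interpret prob_space M by fact
  let ?A = "{t::real. y < \<bar>t\<bar>}"
  have Am: "?A \<in> sets lborel" by measurable
  have eq: "{\<omega>\<in>space M. y < \<bar>X \<omega>\<bar>} = X -` ?A \<inter> space M" by auto
  have "emeasure M {\<omega>\<in>space M. y < \<bar>X \<omega>\<bar>} = (\<integral>\<^sup>+t. ennreal (std_normal_density t) * indicator ?A t \<partial>lborel)"
    unfolding eq by (rule distributed_emeasure[OF assms(1) Am])
  also have "\<dots> \<le> (\<integral>\<^sup>+t. ennreal (2 * exp (- 3 * y^2 / 8)) * ennreal (normal_density 0 2 t) \<partial>lborel)"
  proof (rule nn_integral_mono)
    fix t :: real
    have "std_normal_density t * indicator ?A t \<le> std_normal_density t * exp (3 * t^2 / 8 - 3 * y^2/8)"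
    proof (cases "y < \<bar>t\<bar>")
      case True
      then have "y^2 \<le> t^2" using assms(3)
        by (metis abs_le_square_iff abs_of_nonneg less_imp_le)
      then have e: "1 \<le> exp (3 * t^2 / 8 - 3 * y^2/8)" by simp
      show ?thesis using True mult_left_mono[OF e normal_density_nonneg[of 0 1 t]] by simp
    qed (simp add: normal_density_nonneg)
    also have "\<dots> = 2 * exp (- 3 * y^2 / 8) * normal_density 0 2 t"
    proof -
      have "exp (3 * t^2 / 8 - 3 * y^2/8) = exp (3 * t^2 / 8) * exp (- 3 * y^2 / 8)"
        by (simp add: exp_add[symmetric])
      then show ?thesis using nd_id[of t] by (metis mult.assoc mult.commute)
    qed
    finally have "std_normal_density t * indicator ?A t \<le> 2 * exp (- 3 * y^2 / 8) * normal_density 0 2 t" .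
    then have "ennreal (std_normal_density t * indicator ?A t) \<le> ennreal (2 * exp (- 3 * y^2 / 8)) * ennreal (normal_density 0 2 t)"
      by (simp add: ennreal_mult'[symmetric] ennreal_leI)
    then show "ennreal (std_normal_density t) * indicator ?A t \<le> ennreal (2 * exp (- 3 * y^2 / 8)) * ennreal (normal_density 0 2 t)"
      by (cases "y < \<bar>t\<bar>") (auto simp: indicator_def)
  qed
  also have "\<dots> = ennreal (2 * exp (- 3 * y^2 / 8)) * (\<integral>\<^sup>+t. ennreal (normal_density 0 2 t) \<partial>lborel)"
    by (rule nn_integral_cmult) simp
  also have "(\<integral>\<^sup>+t. ennreal (normal_density 0 2 t) \<partial>lborel) = 1"
    by (simp add: nn_integral_eq_integral normal_density_nonneg)
  finally have "emeasure M {\<omega>\<in>space M. y < \<bar>X \<omega>\<bar>} \<le> ennreal (2 * exp (- 3 * y^2 / 8))" by simp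
  then show ?thesis by (simp add: emeasure_eq_measure)
qed


lemma pointwise:
  assumes n: "n \<ge> 1" and k: "k \<in> smallSet f0 n" and w: "\<omega> \<notin> eventA f0 n \<xi> k l"
  shows "2 * sqrt (ln (real n * (real l + 1)^2)) - 1 < \<bar>\<xi> k \<omega>\<bar>"
proof -
  let ?L = "ln (real n * (real l + 1)^2)"
  have sn: "sqrt (real n) > 0" using n by simp
  have f: "\<bar>f0 k\<bar> \<le> 1 / sqrt (real n)" using k by (simp add: smallSet_def)
  have "sqrt (4 * ?L / real n) < \<bar>f0 k + \<xi> k \<omega> / sqrt (real n)\<bar>"
    using w by (simp add: eventA_def obsX_def)
  moreover have "sqrt (4 * ?L / real n) = 2 * sqrt ?L / sqrt (real n)"
    by (simp add: real_sqrt_divide real_sqrt_mult)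
  moreover have "\<bar>f0 k + \<xi> k \<omega> / sqrt (real n)\<bar> \<le> \<bar>f0 k\<bar> + \<bar>\<xi> k \<omega>\<bar> / sqrt (real n)"
    using abs_triangle_ineq[of "f0 k" "\<xi> k \<omega> / sqrt (real n)"] sn by (simp add: abs_div)
  ultimately have "2 * sqrt ?L / sqrt (real n) < 1 / sqrt (real n) + \<bar>\<xi> k \<omega>\<bar> / sqrt (real n)"
    using f by linarith
  then have "2 * sqrt ?L / sqrt (real n) < (1 + \<bar>\<xi> k \<omega>\<bar>) / sqrt (real n)"
    by (simp add: add_divide_distrib)
  then have "2 * sqrt ?L < 1 + \<bar>\<xi> k \<omega>\<bar>" using sn
    by (simp add: divide_less_cancel)
  then show ?thesis by linarith
qed

lemma expbound:
  assumes n: "n \<ge> 2"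
  shows "exp (- 3 * (2 * sqrt (ln (real n * (real l + 1)^2)) - 1)^2 / 8)
     \<le> exp 2 * real n powr (-5/4) * real (Suc l) powr (-5/2)"
proof -
  define x where "x = real n * (real l + 1)^2"
  have xpos: "x > 0" using n by (simp add: x_def)
  have a1: "1 \<le> real n" using n by simp
  have a2: "1 \<le> (real l + 1)^2" by simp
  have x1: "x \<ge> 1" using mult_mono[OF a1 a2] unfolding x_def by simp
  define s where "s = sqrt (ln x)"
  have s0: "s \<ge> 0" using x1 by (simp add: s_def)
  have ss: "s^2 = ln x" using x1 by (simp add: s_def)
  have "- 3 * (2 * s - 1)^2 / 8 \<le> 2 - 5/4 * s^2"
  proof -
    have "0 \<le> (s - 3)^2" by simp
    moreover have "- 3 * (2 * s - 1)^2 / 8 = 2 - 5/4 * s^2 - (s-3)^2/4 - 1/8"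
      by (simp add: power2_eq_square field_simps)
    ultimately show ?thesis by linarith
  qed
  then have "exp (- 3 * (2 * s - 1)^2 / 8) \<le> exp (2 - 5/4 * ln x)" using ss by simp
  also have "\<dots> = exp 2 * x powr (-5/4)"
  proof -
    have "exp (2 - 5/4 * ln x) = exp 2 * exp (ln x * (-5/4))"
      by (simp add: exp_add[symmetric])
    moreover have "exp (ln x * (-5/4)) = x powr (-5/4)"
      using xpos unfolding powr_def by simp
    ultimately show ?thesis by simp
  qed
  also have "x powr (-5/4) = real n powr (-5/4) * real (Suc l) powr (-5/2)"
  proof -
    have "x powr (-5/4) = real n powr (-5/4) * ((real l + 1)^2) powr (-5/4)"
      unfolding x_def by (simp add: powr_mult)
    also have "((real l + 1)^2) powr (-5/4) = (real l + 1) powr (-5/2)"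
    proof -
      have p: "(real l + 1)^2 = (real l + 1) powr 2"
        using powr_realpow[of "real l + 1" 2] by simp
      show ?thesis unfolding p powr_powr by simp
    qed
    finally show ?thesis by (simp add: add.commute)
  qed
  finally show ?thesis unfolding s_def x_def by (simp add: mult.assoc)
qed


lemma cover:
  assumes n: "n \<ge> 1"
  shows "space M - eventAn M \<beta> f0 n \<xi> \<subseteq>
    (\<Union>l. \<Union>k\<in>{l*n..(l+1)*n}. {\<omega>\<in>space M. 2 * sqrt (ln (real n * (real l + 1)^2)) - 1 < \<bar>\<xi> k \<omega>\<bar>})"
proof
  fix \<omega> assume w: "\<omega> \<in> space M - eventAn M \<beta> f0 n \<xi>"
  then have sp: "\<omega> \<in> space M" by simp
  from w have "(\<exists>k. k \<le> n \<and> k \<in> smallSet f0 n \<and> \<omega> \<notin> eventA f0 n \<xi> k 0) \<or>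
     (\<exists>l k. 1 \<le> l \<and> l * n < k \<and> k \<le> (l + 1) * n \<and> k \<in> smallSet f0 n \<and> \<omega> \<notin> eventA f0 n \<xi> k l)"
    unfolding eventAn_def by blast
  then show "\<omega> \<in> (\<Union>l. \<Union>k\<in>{l*n..(l+1)*n}. {\<omega>\<in>space M. 2 * sqrt (ln (real n * (real l + 1)^2)) - 1 < \<bar>\<xi> k \<omega>\<bar>})"
  proof
    assume "\<exists>k. k \<le> n \<and> k \<in> smallSet f0 n \<and> \<omega> \<notin> eventA f0 n \<xi> k 0"
    then obtain k where k: "k \<le> n" "k \<in> smallSet f0 n" "\<omega> \<notin> eventA f0 n \<xi> k 0" by blast
    have "2 * sqrt (ln (real n * (real 0 + 1)^2)) - 1 < \<bar>\<xi> k \<omega>\<bar>"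
      using pointwise[OF n k(2,3)] by simp
    then show ?thesis using k(1) sp by (intro UN_I[of 0] UN_I[of k]) auto
  next
    assume "\<exists>l k. 1 \<le> l \<and> l * n < k \<and> k \<le> (l + 1) * n \<and> k \<in> smallSet f0 n \<and> \<omega> \<notin> eventA f0 n \<xi> k l"
    then obtain l k where k: "l * n < k" "k \<le> (l + 1) * n" "k \<in> smallSet f0 n" "\<omega> \<notin> eventA f0 n \<xi> k l" by blast
    show ?thesis using pointwise[OF n k(3,4)] k(1,2) sp by (intro UN_I[of l] UN_I[of k]) auto
  qed
qed

lemma bound:
  assumes P: "prob_space M" and D: "\<And>k. distributed M lborel (\<xi> k) std_normal_density"
    and n: "n \<ge> 2"
  shows "measure M (space M - eventAn M \<beta> f0 n \<xi>)
     \<le> 2 * exp 2 * (real n + 1) * real n powr (-5/4) * (\<Sum>l. real (Suc l) powr (-5/2))"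
proof -
  interpret prob_space M by fact
  define y where "y l = 2 * sqrt (ln (real n * (real l + 1)^2)) - 1" for l
  define C where "C l k = {\<omega>\<in>space M. y l < \<bar>\<xi> k \<omega>\<bar>}" for l k
  define Dl where "Dl l = (\<Union>k\<in>{l*n..(l+1)*n}. C l k)" for l
  define c where "c = 2 * exp 2 * (real n + 1) * real n powr (-5/4)"
  have meas: "\<xi> k \<in> borel_measurable M" for k
    using distributed_measurable[OF D[of k]] by simp
  have Cm: "C l k \<in> sets M" for l k
    unfolding C_def using meas[of k] by measurable
  have Dm: "Dl l \<in> sets M" for l
    unfolding Dl_def using Cm by auto
  have y0: "y l \<ge> 0" for l
  proof -
    have "ln 2 \<le> ln (real n * (real l + 1)^2)"
    proof -
      have a1: "2 \<le> real n" using n by simp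
      have a2: "1 \<le> (real l + 1)^2" by simp
      have "2 * 1 \<le> real n * (real l + 1)^2" using mult_mono[OF a1 a2] by simp
      then show ?thesis by simp
    qed
    moreover have "ln 2 > (1/4::real)" using ln_2_less_1 ln2_ge_two_thirds by linarith
    ultimately have "1/4 \<le> ln (real n * (real l + 1)^2)" by linarith
    then have "sqrt (1/4) \<le> sqrt (ln (real n * (real l + 1)^2))" by (rule real_sqrt_le_mono)
    moreover have "sqrt (1/4::real) = 1/2" by (simp add: real_sqrt_divide)
    ultimately show ?thesis unfolding y_def by linarith
  qed
  have Dle: "measure M (Dl l) \<le> c * real (Suc l) powr (-5/2)" for l
  proof -
    have "measure M (Dl l) \<le> (\<Sum>k\<in>{l*n..(l+1)*n}. measure M (C l k))"
      unfolding Dl_def by (rule finite_measure_subadditive_finite) (use Cm in auto)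
    also have "\<dots> \<le> (\<Sum>k\<in>{l*n..(l+1)*n}. 2 * exp (- 3 * (y l)^2 / 8))"
      by (rule sum_mono) (unfold C_def, rule gauss_tail[OF D P y0])
    also have "\<dots> = (real n + 1) * (2 * exp (- 3 * (y l)^2 / 8))"
      by simp
    also have "\<dots> \<le> (real n + 1) * (2 * (exp 2 * real n powr (-5/4) * real (Suc l) powr (-5/2)))"
      using expbound[OF n, of l] unfolding y_def by simp
    finally show ?thesis unfolding c_def by (simp add: mult_ac)
  qed
  have sumS: "summable (\<lambda>l. real (Suc l) powr (-5/2))"
    using summable_real_powr_iff[of "-5/2"] summable_Suc_iff[of "\<lambda>l. real l powr (-5/2)"] by simp
  have sumD: "summable (\<lambda>l. measure M (Dl l))"
    by (rule summable_comparison_test[OF _ summable_mult[OF sumS, of c]]) (use Dle in auto)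
  have "measure M (space M - eventAn M \<beta> f0 n \<xi>) \<le> measure M (\<Union>l. Dl l)"
    apply (rule finite_measure_mono)
    using cover[of n M \<beta> f0 \<xi>] n apply (simp add: Dl_def C_def y_def)
    using Dm by auto
  also have "\<dots> \<le> (\<Sum>l. measure M (Dl l))"
    by (rule finite_measure_subadditive_countably) (use Dm sumD in auto)
  also have "\<dots> \<le> (\<Sum>l. c * real (Suc l) powr (-5/2))"
    by (rule suminf_le[OF Dle sumD summable_mult[OF sumS]])
  also have "\<dots> = c * (\<Sum>l. real (Suc l) powr (-5/2))"
    by (rule suminf_mult[OF sumS])
  finally show ?thesis unfolding c_def .
qed


theorem mainTheorem7:
  fixes M :: "'a measure" and \<beta> F :: real and f0 :: "nat \<Rightarrow> real" and \<xi> :: "nat \<Rightarrow> 'a \<Rightarrow> real"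
  assumes "prob_space M"
    and "\<beta> > 0" and "F > 0"
    and "summable (\<lambda>k. real k powr (2 * \<beta>) * (f0 k)\<^sup>2)"
    and "(\<Sum>k. real k powr (2 * \<beta>) * (f0 k)\<^sup>2) \<le> F\<^sup>2"
    and "prob_space.indep_vars M (\<lambda>_. borel) \<xi> UNIV"
    and "\<And>k. distributed M lborel (\<xi> k) std_normal_density"
  shows "(\<lambda>n. measure M (space M - eventAn M \<beta> f0 n \<xi>)) \<longlonglongrightarrow> 0"
proof -
  define S where "S = (\<Sum>l. real (Suc l) powr (-5/2))"
  have lim: "(\<lambda>n::nat. 2 * exp 2 * (real n + 1) * real n powr (-5/4) * S) \<longlonglongrightarrow> 0"
  proof -
    have "(\<lambda>n::nat. (real n + 1) * real n powr (-5/4)) \<longlonglongrightarrow> 0" by real_asymp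
    then have "(\<lambda>n::nat. (2 * exp 2) * ((real n + 1) * real n powr (-5/4)) * S) \<longlonglongrightarrow> (2 * exp 2) * 0 * S"
      by (intro tendsto_intros)
    then show ?thesis by (simp add: mult_ac)
  qed
  show ?thesis
  proof (rule tendsto_sandwich[OF _ _ tendsto_const lim])
    show "\<forall>\<^sub>F n in sequentially. 0 \<le> measure M (space M - eventAn M \<beta> f0 n \<xi>)" by simp
    show "\<forall>\<^sub>F n in sequentially. measure M (space M - eventAn M \<beta> f0 n \<xi>) \<le> 2 * exp 2 * (real n + 1) * real n powr (-5/4) * S"
      using eventually_ge_at_top[of 2] 
      by eventually_elim (unfold S_def, rule bound[OF assms(1) assms(7)])
  qed
qed

end
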